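(* Assume the setting below, in which $Q:[0,T_1)\to\mathbb{R}$ is defined by $Q(t)=\int_{B_{R(t)}}\mathbf x\cdot\mathbf u\sqrt{1+|\mathbf u|^2}(\varrho+p+\Pi)\,dx$ for a solution existing on $[0,T_1)$, $E=E(0)>0$, $R(t)=R_0+ct$ with $0<c<1$, and $b$ is the constant below. Suppose $Q$ satisfies on $[0,T_1)$ $$\dot Q\ge E+bR^3-\sqrt{(E+bR^3)^2-\frac{Q^2}{R^2}}-kR^3$$ for some constant $k>0$. Assume there exists $\bar R>R_0$ such that, with $A=c\big(1+\frac{3b\bar R^3}{E+b\bar R^3}\big)$ and $B=\frac{k\bar R^3}{E+b\bar R^3}$, $$A^2+2B-B^2>0,\quad A+B<1,\quad z_0:=\frac{A(1-B)+\sqrt{A^2+2B-B^2}}{A^2+1}<1,$$ $$\int_{\frac12+\frac{z_0}{2}}^1\frac{dz}{1-\sqrt{1-z^2}-Az-B}<\log\Big(\frac{\bar R}{R_0}\Big),\qquad \frac{Q(0)}{R_0(E+bR_0^3)}>\frac{z_0}{2}+\frac12.$$ Then $T_1<(\bar R-R_0)/c$; i.e. $Q$ is necessarily defined only on a finite interval and cannot be extended smoothly, as a function satisfying the differential inequality, up to time $(\bar R-R_0)/c$.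
   Context: Setting: Minkowski space $\mathbb{R}^{1+3}$ ($g=\mathrm{diag}(-1,1,1,1)$), $B_R=\{|x|<R\}$. $(\varrho,n,\Pi,u)$ is a smooth admissible solution of the Müller–Israel–Stewart equations $u^\alpha\partial_\alpha\varrho+(\varrho+p+\Pi)\partial_\alpha u^\alpha=0$, $(\varrho+p+\Pi)u^\beta\partial_\beta u_\alpha+(g_\alpha^\beta+u_\alpha u^\beta)\partial_\beta(p+\Pi)=0$, $u^\alpha\partial_\alpha n+n\partial_\alpha u^\alpha=0$, $\tau_0u^\alpha\partial_\alpha\Pi+\Pi+\lambda\Pi^2+\zeta\partial_\alpha u^\alpha=0$ (values in $\mathcal P=\{\varrho>0,n>0,0<c_s^2<1\}$, $c_s^2=\frac{\zeta}{\tau_0(\varrho+p+\Pi)}+\partial_\varrho p+\frac{n\partial_np}{\varrho+p+\Pi}$), under assumptions (A1)–(A5): (A1) $p,\zeta,\tau_0$ smooth on $\mathbb{R}^+\times\mathbb{R}^+$ with smooth extensions to $\mathbb{R}\times\mathbb{R}^+$, constants $p_0,p_1\ge0$ with $-\varrho\le p\le\varrho+p_1$, $-p_0<p$ at physical states; (A2) $p$ globally Lipschitz on $\mathbb{R}\times\mathbb{R}^+$, $\partial_\varrho p,\partial_np\ne0$ at physical states; (A3) $\zeta\ge0$, $\tau_0>c'>0$ smooth on $\mathbb{R}\times\mathbb{R}^+$, $\partial_\varrho(\zeta/\tau_0),\partial_n(\zeta/\tau_0)$ bounded, $\partial_\varrho(\zeta/\tau_0)\ge0$; (A4) $\int_0^\infty\frac1n\sup_\varrho|\zeta/\tau_0|dn\le\bar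 A$ for a constant $\bar A>0$; (A5) $\lambda\equiv0$ or $\lambda>0$ smooth with $p+\varrho<1/\lambda$ at physical states. The initial data satisfy $\mathring\varrho+p+\mathring\Pi\ge0$ and the solution equals $(\bar\varrho,\bar n,0,\mathbf u=0)$ outside $B_{R(t)}$. $E=\int_{\mathbb{R}^3}\big((\varrho+p+\Pi)(u^0)^2-(p+\Pi)-\bar\varrho\big)dx$ at $t=0$, with $u^0=\sqrt{1+|\mathbf u|^2}$. $b=\frac{4\pi}{3}(\bar\varrho+p_1+\|\mathring\Pi\|_\infty+3\bar A)$. *)

theory Defs
  imports "HOL-Analysis.Analysis"
begin

end

theory Submission
  imports Defs
begin


lemma gpos:
  fixes A B z z0 :: real
  assumes A: "A > 0" and AB: "A + B < 1" and D: "A\<^sup>2 + 2*B - B\<^sup>2 > 0"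
    and z0def: "z0 = (A*(1-B) + sqrt (A\<^sup>2 + 2*B - B\<^sup>2)) / (A\<^sup>2+1)"
    and zz: "z0 < z" and z1: "z \<le> 1"
  shows "1 - sqrt (1 - z\<^sup>2) - A*z - B > 0"
proof -
  define s where "s = sqrt (A\<^sup>2 + 2*B - B\<^sup>2)"
  have s0: "s > 0" using D s_def by simp
  have ss: "s^2 = A\<^sup>2 + 2*B - B\<^sup>2" using D s_def by simp
  define z0' where "z0' = (A*(1-B) - s) / (A\<^sup>2+1)"
  have "z0' \<le> z0" using s0 unfolding z0def z0'_def s_def[symmetric]
    by (simp add: divide_right_mono add_pos_pos)
  have "A * z \<le> A" using A z1 by simp
  hence pos: "1 - A*z - B > 0" using AB by linarith
  have z0pos: "z0 > 0" using A AB s0 unfolding z0def s_def[symmetric]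
    by (intro divide_pos_pos add_pos_pos mult_pos_pos) auto
  have zge: "z \<ge> 0" using zz z0pos by linarith
  have K: "A\<^sup>2+1 > 0" by (metis add_pos_nonneg zero_less_one zero_le_power2 add.commute)
  have e1: "(A\<^sup>2+1) * (z - z0) * (z - z0') = (((A\<^sup>2+1)*z - A*(1-B))^2 - s^2)/(A\<^sup>2+1)"
  proof -
    define K where "K = A\<^sup>2+1"
    have Kp: "K > 0" using K K_def by simp
    have a: "z - z0 = (K*z - (A*(1-B) + s))/K" unfolding z0def s_def[symmetric] K_def[symmetric]
      using Kp by (simp add: field_simps)
    have b: "z - z0' = (K*z - (A*(1-B) - s))/K" unfolding z0'_def K_def[symmetric]
      using Kp by (simp add: field_simps)
    have c: "(K*z - (A*(1-B) + s)) * (K*z - (A*(1-B) - s)) = (K*z - A*(1-B))^2 - s^2"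
      by (simp add: power2_eq_square algebra_simps)
    show ?thesis unfolding K_def[symmetric] a b using Kp c[symmetric]
      by (simp add: power2_eq_square field_simps)
  qed
  have iden: "(1 - A*z - B)^2 - (1 - z\<^sup>2) = (A\<^sup>2+1) * (z - z0) * (z - z0')"
  proof -
    have "(1 - A*z - B)^2 - (1 - z\<^sup>2) = (((A\<^sup>2+1)*z - A*(1-B))^2 - (A\<^sup>2 + 2*B - B\<^sup>2))/(A\<^sup>2+1)"
      using K by (simp add: field_simps) (simp add: power2_eq_square algebra_simps)
    thus ?thesis using e1 ss by simp
  qed
  have "(A\<^sup>2+1) * (z - z0) * (z - z0') > 0"
    using zz \<open>z0' \<le> z0\<close> K by (intro mult_pos_pos) auto
  hence lt: "1 - z\<^sup>2 < (1 - A*z - B)^2" using iden by linarith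
  have "sqrt (1 - z\<^sup>2) < sqrt ((1 - A*z - B)^2)"
    using lt by (simp only: real_sqrt_less_iff)
  also have "\<dots> = 1 - A*z - B" using pos by simp
  finally show ?thesis by linarith
qed

lemma ratio_mono:
  fixes E b R Rbar :: real
  assumes "E > 0" "b > 0" "R > 0" "R \<le> Rbar"
  shows "R^3 / (E + b*R^3) \<le> Rbar^3 / (E + b*Rbar^3)"
proof -
  have p: "R^3 \<le> Rbar^3" using assms by (simp add: power_mono)
  have "R^3 * (E + b*Rbar^3) \<le> Rbar^3 * (E + b*R^3)"
    using p assms by (simp add: algebra_simps)
  moreover have "E + b*R^3 > 0" "E + b*Rbar^3 > 0" using assms p by (auto intro!: add_pos_nonneg)
  ultimately show ?thesis by (simp add: divide_simps)
qed

lemma keyineq: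
  fixes E b k c R Rbar q q' zd A B :: real
  assumes E: "E > 0" and b: "b > 0" and k: "k > 0" and c: "c > 0" and R: "R > 0" and RR: "R \<le> Rbar"
    and Adef: "A = c*(1+3*b*Rbar^3/(E+b*Rbar^3))" and Bdef: "B = k*Rbar^3/(E+b*Rbar^3)"
    and rad: "q\<^sup>2/R\<^sup>2 \<le> (E+b*R^3)\<^sup>2"
    and di: "q' \<ge> E + b*R^3 - sqrt((E+b*R^3)\<^sup>2 - q\<^sup>2/R\<^sup>2) - k*R^3"
    and zpos: "q/(R*(E+b*R^3)) \<ge> 0"
    and zd: "zd = (q' * (R*(E+b*R^3)) - q * (c*(E+b*R^3) + R*(3*b*R^2*c))) / (R*(E+b*R^3))^2"
  shows "R*zd \<ge> 1 - sqrt(1 - (q/(R*(E+b*R^3)))\<^sup>2) - A*(q/(R*(E+b*R^3))) - B"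
proof -
  define F where "F = E+b*R^3"
  have F: "F > 0" unfolding F_def using E b R by (intro add_pos_nonneg) auto
  define z where "z = q/(R*F)"
  have e1: "R*zd = q'/F - z*(c*(1+3*b*R^3/F))"
    unfolding zd z_def F_def[symmetric] using F R by (simp add: field_simps power2_eq_square power3_eq_cube)
  have e2: "F\<^sup>2 - q\<^sup>2/R\<^sup>2 = F\<^sup>2 * (1 - z\<^sup>2)"
    unfolding z_def using F R by (simp add: field_simps power2_eq_square)
  have e3: "sqrt(F\<^sup>2 - q\<^sup>2/R\<^sup>2) = F * sqrt(1 - z\<^sup>2)"
    unfolding e2 real_sqrt_mult using F by simp
  have "q' \<ge> F - F * sqrt(1 - z\<^sup>2) - k*R^3" using di e3 unfolding F_def by simp
  hence "q'/F \<ge> (F - F * sqrt(1 - z\<^sup>2) - k*R^3)/F" using F by (simp add: divide_right_mono)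
  also have "(F - F * sqrt(1 - z\<^sup>2) - k*R^3)/F = 1 - sqrt(1 - z\<^sup>2) - k*(R^3/F)"
    using F by (simp add: field_simps)
  finally have i1: "q'/F \<ge> 1 - sqrt(1 - z\<^sup>2) - k*(R^3/F)" .
  have rm: "R^3/F \<le> Rbar^3/(E+b*Rbar^3)" unfolding F_def using ratio_mono[OF E b R RR] .
  have i2: "k*(R^3/F) \<le> B" unfolding Bdef using mult_left_mono[OF rm, of k] k by (simp only: times_divide_eq_right)
  have "3*b*R^3/F = 3*b*(R^3/F)" by simp
  moreover have "3*b*(R^3/F) \<le> 3*b*(Rbar^3/(E+b*Rbar^3))" using mult_left_mono[OF rm, of "3*b"] b by simp
  ultimately have "c*(1+3*b*R^3/F) \<le> A" unfolding Adef using c by (simp add: mult_left_mono)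
  moreover have zz: "z \<ge> 0" using zpos unfolding z_def F_def .
  ultimately have i3: "z*(c*(1+3*b*R^3/F)) \<le> z*A" by (rule mult_left_mono)
  have "R*zd \<ge> 1 - sqrt(1 - z\<^sup>2) - A*z - B" using e1 i1 i2 i3 by (simp add: algebra_simps)
  thus ?thesis unfolding z_def F_def .
qed



theorem mainTheorem10:
  fixes Q Q' :: "real \<Rightarrow> real"
    and E b k c R0 Rbar T1 :: real
  assumes E_pos: "E > 0" and b_pos: "b > 0" and k_pos: "k > 0"
    and c_pos: "0 < c" and c_lt1: "c < 1" and R0_pos: "R0 > 0" and T1_pos: "T1 > 0"
    and deriv: "\<And>t. t \<in> {0..<T1} \<Longrightarrow> (Q has_real_derivative Q' t) (at t within {0..<T1})"
    and radicand: "\<And>t. t \<in> {0..<T1} \<Longrightarrow>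
         (Q t)\<^sup>2 / (R0 + c * t)\<^sup>2 \<le> (E + b * (R0 + c * t) ^ 3)\<^sup>2"
    and diffineq: "\<And>t. t \<in> {0..<T1} \<Longrightarrow>
         Q' t \<ge> E + b * (R0 + c * t) ^ 3
                 - sqrt ((E + b * (R0 + c * t) ^ 3)\<^sup>2 - (Q t)\<^sup>2 / (R0 + c * t)\<^sup>2)
                 - k * (R0 + c * t) ^ 3"
    and Rbar: "Rbar > R0"
    and h1: "(c * (1 + 3 * b * Rbar ^ 3 / (E + b * Rbar ^ 3)))\<^sup>2
              + 2 * (k * Rbar ^ 3 / (E + b * Rbar ^ 3))
              - (k * Rbar ^ 3 / (E + b * Rbar ^ 3))\<^sup>2 > 0"
    and h2: "c * (1 + 3 * b * Rbar ^ 3 / (E + b * Rbar ^ 3)) + k * Rbar ^ 3 / (E + b * Rbar ^ 3) < 1"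
    and h3: "(let A = c * (1 + 3 * b * Rbar ^ 3 / (E + b * Rbar ^ 3));
                  B = k * Rbar ^ 3 / (E + b * Rbar ^ 3);
                  z0 = (A * (1 - B) + sqrt (A\<^sup>2 + 2 * B - B\<^sup>2)) / (A\<^sup>2 + 1)
              in z0 < 1
                 \<and> integral {1/2 + z0/2 .. 1} (\<lambda>z. 1 / (1 - sqrt (1 - z\<^sup>2) - A * z - B)) < ln (Rbar / R0)
                 \<and> Q 0 / (R0 * (E + b * R0 ^ 3)) > z0 / 2 + 1/2)"
  shows "T1 < (Rbar - R0) / c"
proof (rule ccontr)
  assume "\<not> T1 < (Rbar - R0) / c"
  hence Tge: "(Rbar - R0) / c \<le> T1" by simp
  define Ts where "Ts = (Rbar - R0) / c"
  have Ts0: "Ts > 0" unfolding Ts_def using Rbar c_pos by simp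
  define A where "A = c * (1 + 3 * b * Rbar ^ 3 / (E + b * Rbar ^ 3))"
  define B where "B = k * Rbar ^ 3 / (E + b * Rbar ^ 3)"
  define z0 where "z0 = (A * (1 - B) + sqrt (A\<^sup>2 + 2 * B - B\<^sup>2)) / (A\<^sup>2 + 1)"
  have h3': "z0 < 1" "integral {1/2 + z0/2 .. 1} (\<lambda>z. 1 / (1 - sqrt (1 - z\<^sup>2) - A * z - B)) < ln (Rbar / R0)"
     "Q 0 / (R0 * (E + b * R0 ^ 3)) > z0 / 2 + 1/2"
    using h3 unfolding Let_def A_def[symmetric] B_def[symmetric] z0_def[symmetric] by auto
  have Rb0: "Rbar > 0" using Rbar R0_pos by simp
  have Fb: "E + b * Rbar ^ 3 > 0" using E_pos b_pos Rb0 by (intro add_pos_nonneg) auto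
  have A0: "A > 0" unfolding A_def using c_pos b_pos Rb0 Fb by (intro mult_pos_pos add_pos_nonneg) auto
  have B0: "B > 0" unfolding B_def using k_pos Rb0 Fb by simp
  have AB: "A + B < 1" using h2 unfolding A_def B_def .
  have D: "A\<^sup>2 + 2 * B - B\<^sup>2 > 0" using h1 unfolding A_def B_def .
  have z0pos: "z0 > 0" unfolding z0_def using A0 AB D
    by (intro divide_pos_pos add_pos_nonneg mult_pos_pos) auto
  define z1 where "z1 = 1/2 + z0/2"
  have z01: "z0 < z1" "z1 < 1" using h3'(1) unfolding z1_def by auto
  define g where "g = (\<lambda>z. 1 - sqrt (1 - z\<^sup>2) - A * z - B)"
  have gpos: "\<And>z. z1 \<le> z \<Longrightarrow> z \<le> 1 \<Longrightarrow> g z > 0"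
    unfolding g_def using gpos[OF A0 AB D z0_def] z01 by force
  define Rf where "Rf = (\<lambda>s. R0 + c * s)"
  define P where "P = (\<lambda>s. Rf s * (E + b * Rf s ^ 3))"
  define Pd where "Pd = (\<lambda>s. c * (E + b * Rf s ^ 3) + Rf s * (3 * b * Rf s ^ 2 * c))"
  define zf where "zf = (\<lambda>s. Q s / P s)"
  define zd where "zd = (\<lambda>s. (Q' s * P s - Q s * Pd s) / (P s)^2)"
  have Rpos: "\<And>s. s \<ge> 0 \<Longrightarrow> Rf s > 0" unfolding Rf_def using R0_pos c_pos
    by (simp add: add_pos_nonneg)
  have Ppos: "\<And>s. s \<ge> 0 \<Longrightarrow> P s > 0" unfolding P_def using Rpos E_pos b_pos
    by (metis mult_pos_pos add_pos_nonneg zero_le_power less_imp_le mult_nonneg_nonneg)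
  have Pder: "\<And>s. (P has_real_derivative Pd s) (at s within X)" for X
    unfolding P_def Pd_def Rf_def
    by (rule derivative_eq_intros refl | simp)+
  have zder: "\<And>s. s \<in> {0..<T1} \<Longrightarrow> (zf has_real_derivative zd s) (at s within {0..<T1})"
  proof -
    fix s assume s: "s \<in> {0..<T1}"
    have "((\<lambda>s. Q s / P s) has_real_derivative (Q' s * P s - Q s * Pd s) / (P s * P s)) (at s within {0..<T1})"
      by (rule DERIV_divide[OF deriv[OF s] Pder]) (use Ppos[of s] s in auto)
    thus "(zf has_real_derivative zd s) (at s within {0..<T1})"
      unfolding zf_def zd_def by (simp add: power2_eq_square)
  qed
  have zcont: "continuous_on {0..<T1} zf"
    using zder by (meson DERIV_continuous continuous_on_eq_continuous_within)
  have zat: "\<And>s. s \<in> {0<..<T1} \<Longrightarrow> (zf has_real_derivative zd s) (at s)"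
  proof -
    fix s assume s: "s \<in> {0<..<T1}"
    have "s \<in> interior {0..<T1}" using s by auto
    thus "(zf has_real_derivative zd s) (at s)" using zder[of s] s at_within_interior by fastforce
  qed
  have zle1: "\<And>s. s \<in> {0..<T1} \<Longrightarrow> zf s \<le> 1"
  proof -
    fix s assume s: "s \<in> {0..<T1}"
    have F: "E + b * Rf s ^ 3 > 0" using Rpos[of s] s E_pos b_pos by (simp add: add_pos_nonneg)
    have r: "(Q s)\<^sup>2 / (Rf s)\<^sup>2 \<le> (E + b * Rf s ^ 3)\<^sup>2" using radicand[OF s] unfolding Rf_def .
    have "(zf s)\<^sup>2 = ((Q s)\<^sup>2 / (Rf s)\<^sup>2) / (E + b * Rf s ^ 3)\<^sup>2"
      unfolding zf_def P_def by (simp add: power2_eq_square)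
    also have "\<dots> \<le> 1" using r F by (subst divide_le_eq_1_pos) auto
    finally have "(zf s)\<^sup>2 \<le> 1" .
    thus "zf s \<le> 1" by (metis abs_le_square_iff abs_le_iff abs_one one_power2)
  qed
  have zdpos: "\<And>s. s \<in> {0..<Ts} \<Longrightarrow> z1 \<le> zf s \<Longrightarrow> Rf s * zd s \<ge> g (zf s)"
  proof -
    fix s assume s: "s \<in> {0..<Ts}" and zs: "z1 \<le> zf s"
    have sT: "s \<in> {0..<T1}" using s Tge Ts_def by auto
    have RR: "Rf s \<le> Rbar" using s c_pos unfolding Ts_def Rf_def by (simp add: field_simps)
    have zs0: "Q s / (Rf s * (E + b * Rf s ^ 3)) \<ge> 0" using zs z01 z0pos
      unfolding zf_def P_def by simp
    show "Rf s * zd s \<ge> g (zf s)"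
      using keyineq[OF E_pos b_pos k_pos c_pos Rpos[of s] RR A_def B_def _ _ zs0,
          of "Q' s" "zd s"] radicand[OF sT] diffineq[OF sT] s
      unfolding g_def zf_def P_def zd_def Pd_def Rf_def by simp
  qed
  have part1: "\<And>t. t \<in> {0..<Ts} \<Longrightarrow> zf t > z1"
  proof (rule ccontr)
    fix t assume t: "t \<in> {0..<Ts}" and nt: "\<not> zf t > z1"
    define K where "K = zf -` {..z1} \<inter> {0..t}"
    have ct: "continuous_on {0..t} zf" using zcont
      by (rule continuous_on_subset) (use t Tge Ts_def in auto)
    have "closed K" unfolding K_def using ct continuous_on_closed_vimage[of "{0..t}" zf] by auto
    moreover have "bounded K" unfolding K_def by (rule bounded_subset[OF bounded_closed_interval]) auto
    ultimately have "compact K" by (simp add: compact_eq_bounded_closed)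
    moreover have "t \<in> K" unfolding K_def using t nt by auto
    ultimately obtain t0 where t0: "t0 \<in> K" "\<And>s. s \<in> K \<Longrightarrow> t0 \<le> s"
      using compact_attains_inf[of K] by blast
    have z00: "zf 0 > z1" using h3'(3) unfolding zf_def P_def Rf_def z1_def by simp
    have t0K: "zf t0 \<le> z1" "0 \<le> t0" "t0 \<le> t" using t0(1) unfolding K_def by auto
    have "zf 0 \<le> zf t0"
    proof (rule DERIV_nonneg_imp_increasing_open[OF t0K(2)])
      fix x assume x: "0 < x" "x < t0"
      have xK: "x \<notin> K" using t0(2)[of x] x by auto
      hence zx: "zf x > z1" unfolding K_def using x t0K by auto
      have xs: "x \<in> {0..<Ts}" using x t0K t by auto
      have "Rf x * zd x \<ge> g (zf x)" using zdpos[OF xs] zx by simp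
      moreover have "g (zf x) > 0" using gpos[of "zf x"] zx zle1[of x] xs Tge Ts_def by auto
      moreover have "Rf x > 0" using Rpos x by simp
      ultimately have "zd x > 0" by (metis less_le_trans zero_less_mult_pos)
      moreover have "(zf has_real_derivative zd x) (at x)" using zat[of x] xs Tge Ts_def x by auto
      ultimately show "\<exists>y. (zf has_real_derivative y) (at x) \<and> 0 \<le> y" by auto
    next
      show "continuous_on {0..t0} zf" using ct by (rule continuous_on_subset) (use t0K in auto)
    qed
    thus False using z00 t0K by simp
  qed
  define h where "h = (\<lambda>u. 1 / g (max z1 (min 1 u)))"
  have gcont: "continuous_on UNIV (\<lambda>u. g (max z1 (min 1 u)))"
    unfolding g_def by (intro continuous_intros)
  have hpos: "\<And>u. h u > 0" unfolding h_def using gpos z01 by auto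
  have hcont: "continuous_on UNIV h" unfolding h_def
    by (rule continuous_on_divide[OF continuous_on_const gcont]) (use gpos z01 in \<open>metis less_irrefl max.cobounded1 max.boundedI min.cobounded1 less_imp_le\<close>)
  have hg: "\<And>u. z1 \<le> u \<Longrightarrow> u \<le> 1 \<Longrightarrow> h u = 1 / g u" unfolding h_def by simp
  define G where "G = (\<lambda>u. integral {z1..u} h)"
  have Gder: "\<And>u. u \<in> {z1..2} \<Longrightarrow> (G has_real_derivative h u) (at u within {z1..2})"
    using integral_has_vector_derivative[OF continuous_on_subset[OF hcont], of z1 2]
    unfolding G_def has_real_derivative_iff_has_vector_derivative by auto
  have Gat: "\<And>u. u \<in> {z1<..<2} \<Longrightarrow> (G has_real_derivative h u) (at u)"
  proof -
    fix u assume u: "u \<in> {z1<..<2}"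
    hence "u \<in> interior {z1..2}" by simp
    thus "(G has_real_derivative h u) (at u)" using Gder[of u] u at_within_interior by fastforce
  qed
  have Gcont: "continuous_on {z1..2} G"
    using Gder by (meson DERIV_continuous continuous_on_eq_continuous_within)
  have Gmono: "\<And>u v. z1 \<le> u \<Longrightarrow> u \<le> v \<Longrightarrow> v \<le> 2 \<Longrightarrow> G u \<le> G v"
  proof -
    fix u v assume uv: "z1 \<le> u" "u \<le> v" "v \<le> 2"
    show "G u \<le> G v"
    proof (rule DERIV_nonneg_imp_increasing_open[OF uv(2)])
      fix x assume "u < x" "x < v"
      thus "\<exists>y. (G has_real_derivative y) (at x) \<and> 0 \<le> y"
        using Gat[of x] hpos[of x] uv by (intro exI[of _ "h x"]) auto
    next
      show "continuous_on {u..v} G" using Gcont by (rule continuous_on_subset) (use uv in auto)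
    qed
  qed
  have G1: "G 1 = integral {z1..1} (\<lambda>z. 1/(1 - sqrt(1-z\<^sup>2) - A*z - B))"
    unfolding G_def by (rule integral_cong) (use hg in \<open>auto simp: g_def\<close>)
  have Gz1: "G z1 = 0" unfolding G_def by simp
  define I where "I = G 1"
  have Ilt: "I < ln (Rbar/R0)" using h3'(2) G1 unfolding z1_def I_def by simp
  have I0: "I \<ge> 0" using Gmono[of z1 1] Gz1 z01 unfolding I_def by simp
  define L where "L = (I + ln (Rbar/R0))/2"
  have L: "I < L" "L < ln(Rbar/R0)" "L \<ge> 0" using Ilt I0 unfolding L_def by auto
  define t where "t = (R0 * exp L - R0)/c"
  have Rft: "Rf t = R0 * exp L" unfolding Rf_def t_def using c_pos by simp
  have "exp L < Rbar/R0" using L(2) Rb0 R0_pos by (metis exp_less_cancel_iff exp_ln divide_pos_pos)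
  hence "R0 * exp L < Rbar" using R0_pos by (simp add: field_simps)
  moreover have "exp L \<ge> 1" using L(3) by simp
  hence "R0 * exp L \<ge> R0" using R0_pos by simp
  ultimately have tin: "t \<in> {0..<Ts}" unfolding t_def Ts_def using c_pos
    by (auto simp: field_simps)
  define H where "H = (\<lambda>s. G (zf s) - ln (R0 + c * s) / c)"
  have "H 0 \<le> H t"
  proof (rule DERIV_nonneg_imp_increasing_open[of 0 t H])
    show "0 \<le> t" using tin by simp
  next
    fix x assume x: "0 < x" "x < t"
    have xs: "x \<in> {0..<Ts}" using x tin by auto
    have xT: "x \<in> {0<..<T1}" using x tin Tge Ts_def by auto
    have zx: "zf x > z1" "zf x \<le> 1" using part1[OF xs] zle1[of x] xT by auto
    have Rx: "Rf x > 0" using Rpos x by simp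
    have d1: "((\<lambda>s. G (zf s)) has_real_derivative h (zf x) * zd x) (at x)"
      by (rule DERIV_chain2[OF Gat zat[OF xT]]) (use zx in auto)
    have d2: "((\<lambda>s. ln (R0 + c * s) / c) has_real_derivative 1 / Rf x) (at x)"
    proof -
      have "R0 * (c * c) + c * (c * (c * x)) = (c*c)*(R0 + c*x)" by (simp add: algebra_simps)
      moreover have "(c*c)*(R0 + c*x) > 0" using Rx c_pos unfolding Rf_def by simp
      ultimately have pp: "R0 * (c * c) + c * (c * (c * x)) \<noteq> 0" using c_pos Rx unfolding Rf_def by auto
      show ?thesis using Rx c_pos pp unfolding Rf_def
        by (auto intro!: derivative_eq_intros simp: field_simps)
    qed
    have dH: "(H has_real_derivative h (zf x) * zd x - 1 / Rf x) (at x)"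
      unfolding H_def by (rule DERIV_diff[OF d1 d2])
    have gx: "g (zf x) > 0" using gpos zx by auto
    have "Rf x * zd x \<ge> g (zf x)" using zdpos[OF xs] zx by simp
    hence "zd x / g (zf x) \<ge> 1 / Rf x" using gx Rx by (simp add: field_simps)
    hence "h (zf x) * zd x - 1 / Rf x \<ge> 0" using hg[of "zf x"] zx by simp
    thus "\<exists>y. (H has_real_derivative y) (at x) \<and> 0 \<le> y" using dH by auto
  next
    have ct: "continuous_on {0..t} zf" using zcont
      by (rule continuous_on_subset) (use tin Tge Ts_def in auto)
    have im: "zf ` {0..t} \<subseteq> {z1..2}"
    proof
      fix y assume "y \<in> zf ` {0..t}"
      then obtain s where s: "s \<in> {0..t}" "y = zf s" by auto
      have "s \<in> {0..<Ts}" using s tin by auto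
      thus "y \<in> {z1..2}" using part1[of s] zle1[of s] s Tge Ts_def by auto
    qed
    have c1: "continuous_on {0..t} (\<lambda>s. G (zf s))"
      using continuous_on_compose2[OF Gcont ct im] .
    have c2: "continuous_on {0..t} (\<lambda>s. ln (R0 + c * s) / c)"
      by (intro continuous_intros) (use R0_pos c_pos in \<open>auto, smt (verit) mult_nonneg_nonneg\<close>)
    show "continuous_on {0..t} H" unfolding H_def using c1 c2 by (rule continuous_on_diff)
  qed
  hence Hineq: "G (zf 0) - ln R0 / c \<le> G (zf t) - ln (R0 * exp L) / c"
    unfolding H_def using Rft unfolding Rf_def by simp
  have z0in: "z1 \<le> zf 0" "zf 0 \<le> 1" using part1[of 0] zle1[of 0] Ts0 T1_pos by auto
  have "G (zf 0) \<ge> 0" using Gmono[of z1 "zf 0"] Gz1 z0in by simp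
  moreover have "G (zf t) \<le> I" unfolding I_def
    using Gmono[of "zf t" 1] part1[OF tin] zle1[of t] tin Tge Ts_def by auto
  moreover have "ln (R0 * exp L) = ln R0 + L" using R0_pos by (simp add: ln_mult)
  ultimately have "L / c \<le> I" using Hineq by (simp add: diff_divide_distrib add_divide_distrib)
  hence "L \<le> c * I" using c_pos by (simp add: divide_le_eq mult.commute)
  also have "c * I \<le> I" using mult_right_mono[of c 1 I] c_lt1 I0 by simp
  finally show False using L(1) by simp
qed

end
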